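(* Let $H$ be an infinite-dimensional Hilbert $*$-space with hermitian basis $F$, and fix distinct $u,e\in F$. Let $T\in\mathcal B(H)$ be the unitary with $Tu=e$, $Te=u$ and $Tf=f$ for $f\in F\setminus\{u,e\}$. Then $T(\mathfrak c_u)=\mathfrak c_e$, $T^{(n)}(\min\mathfrak c_u\cap M_n(H))=\min\mathfrak c_e\cap M_n(H)$ and $T^{(n)}(\max\mathfrak c_u\cap M_n(H))=\max\mathfrak c_e\cap M_n(H)$ for all $n$; in particular $T:(H,\max\mathfrak c_u)\to(H,\max\mathfrak c_e)$ is a unital matrix positive map. Nevertheless $T$ is not separable: there is no sequence of linear functionals $q_l$ on $H$ that are nonnegative on $\mathfrak c_u$ and vectors $p_l\in\mathfrak c_e$ with $T\zeta=\lim_k\sum_{l=1}^k q_l(\zeta)p_l$ for all $\zeta\in H$.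
   Context: A Hilbert $*$-space is a complex Hilbert space (inner product linear in the first variable) with a conjugate-linear $\zeta\mapsto\zeta^*$, $\zeta^{**}=\zeta$, $(\zeta^*,\eta^* )=\overline{(\zeta,\eta)}$; a hermitian basis is an orthonormal basis of hermitian vectors. For a hermitian unit vector $w$, the unital cone is $\mathfrak c_w=\{\zeta\in H_h:\|\zeta\|\le\sqrt2(\zeta,w)\}$. Matrices over $H$ or the conjugate space $\overline H$ carry the involution $[x_{ij}]^*=[x_{ji}^*]$; $T^{(n)}[\zeta_{ij}]=[T\zeta_{ij}]$. A state of $\mathfrak c_w$ is a linear functional $\sigma$ with $\sigma(w)=1$, $\sigma(\mathfrak c_w)\ge0$; $\min\mathfrak c_w\cap M_n(H)=\{\zeta\in M_n(H)_h:[\sigma(\zeta_{ij})]\ge0\ \forall$ states $\sigma\}$. With $\mathfrak c_w^\boxdot=\{\bar\eta\in M_n(\overline H)_h:[(\xi,\eta_{st})]\ge0\ \forall\xi\in\mathfrak c_w\}$, $\max\mathfrak c_w\cap M_n(H)=\{\zeta\in M_n(H)_h:[(\zeta_{ik},\eta_{jl})]_{(i,j),(k,l)}\ge0\ \forall\bar\eta\in\mathfrak c_w^\boxdot\}$. *)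

theory Defs
  imports "HOL-Analysis.Analysis" "HOL-Library.Complex_Order"
begin

text \<open>A complex Hilbert space with conjugate-linear involution (Hilbert *-space), given by
  an abelian group type 'a with explicit complex scalar multiplication sm, inner product ip
  (linear in the first variable) and involution st.\<close>

definition hnorm :: "('a \<Rightarrow> 'a \<Rightarrow> complex) \<Rightarrow> 'a \<Rightarrow> real" where
  "hnorm ip x = sqrt (Re (ip x x))"

definition hilbert_star_space ::
  "(complex \<Rightarrow> 'a::ab_group_add \<Rightarrow> 'a) \<Rightarrow> ('a \<Rightarrow> 'a \<Rightarrow> complex) \<Rightarrow> ('a \<Rightarrow> 'a) \<Rightarrow> bool" where
  "hilbert_star_space sm ip st \<longleftrightarrow>
     (\<forall>a x y. sm a (x + y) = sm a x + sm a y) \<and>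
     (\<forall>a b x. sm (a + b) x = sm a x + sm b x) \<and>
     (\<forall>a b x. sm a (sm b x) = sm (a * b) x) \<and>
     (\<forall>x. sm 1 x = x) \<and>
     (\<forall>x y z. ip (x + y) z = ip x z + ip y z) \<and>
     (\<forall>a x y. ip (sm a x) y = a * ip x y) \<and>
     (\<forall>x y. ip y x = cnj (ip x y)) \<and>
     (\<forall>x. 0 \<le> ip x x) \<and>
     (\<forall>x. ip x x = 0 \<longrightarrow> x = 0) \<and>
     (\<forall>s :: nat \<Rightarrow> 'a. (\<forall>\<epsilon>>0. \<exists>N. \<forall>m\<ge>N. \<forall>k\<ge>N. hnorm ip (s m - s k) < \<epsilon>)
         \<longrightarrow> (\<exists>x. (\<lambda>k. hnorm ip (s k - x)) \<longlonglongrightarrow> 0)) \<and>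
     (\<forall>x y. st (x + y) = st x + st y) \<and>
     (\<forall>a x. st (sm a x) = sm (cnj a) (st x)) \<and>
     (\<forall>x. st (st x) = x) \<and>
     (\<forall>x y. ip (st x) (st y) = cnj (ip x y))"

definition hermitian_basis ::
  "('a::ab_group_add \<Rightarrow> 'a \<Rightarrow> complex) \<Rightarrow> ('a \<Rightarrow> 'a) \<Rightarrow> 'a set \<Rightarrow> bool" where
  "hermitian_basis ip st F \<longleftrightarrow>
     (\<forall>f\<in>F. st f = f) \<and> (\<forall>f\<in>F. ip f f = 1) \<and>
     (\<forall>f\<in>F. \<forall>g\<in>F. f \<noteq> g \<longrightarrow> ip f g = 0) \<and>
     (\<forall>x. (\<forall>f\<in>F. ip x f = 0) \<longrightarrow> x = 0)"

definition clin_map :: "(complex \<Rightarrow> 'a::ab_group_add \<Rightarrow> 'a) \<Rightarrow> ('a \<Rightarrow> 'a) \<Rightarrow> bool" where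
  "clin_map sm T \<longleftrightarrow> (\<forall>x y. T (x + y) = T x + T y) \<and> (\<forall>a x. T (sm a x) = sm a (T x))"

definition clin_fun :: "(complex \<Rightarrow> 'a::ab_group_add \<Rightarrow> 'a) \<Rightarrow> ('a \<Rightarrow> complex) \<Rightarrow> bool" where
  "clin_fun sm f \<longleftrightarrow> (\<forall>x y. f (x + y) = f x + f y) \<and> (\<forall>a x. f (sm a x) = a * f x)"

definition unitary_op ::
  "(complex \<Rightarrow> 'a::ab_group_add \<Rightarrow> 'a) \<Rightarrow> ('a \<Rightarrow> 'a \<Rightarrow> complex) \<Rightarrow> ('a \<Rightarrow> 'a) \<Rightarrow> bool" where
  "unitary_op sm ip T \<longleftrightarrow> clin_map sm T \<and> (\<exists>C. \<forall>x. hnorm ip (T x) \<le> C * hnorm ip x) \<and>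
     (\<forall>x y. ip (T x) (T y) = ip x y) \<and> surj T"

text \<open>Unital cone c_w = {zeta in H_h : norm zeta <= sqrt 2 (zeta, w)}
  ((zeta,w) is real for hermitian zeta, w).\<close>
definition unital_cone ::
  "('a \<Rightarrow> 'a \<Rightarrow> complex) \<Rightarrow> ('a \<Rightarrow> 'a) \<Rightarrow> 'a \<Rightarrow> 'a set" where
  "unital_cone ip st w = {\<zeta>. st \<zeta> = \<zeta> \<and> hnorm ip \<zeta> \<le> sqrt 2 * Re (ip \<zeta> w)}"

definition is_state ::
  "(complex \<Rightarrow> 'a::ab_group_add \<Rightarrow> 'a) \<Rightarrow> ('a \<Rightarrow> 'a \<Rightarrow> complex) \<Rightarrow> ('a \<Rightarrow> 'a) \<Rightarrow> 'a \<Rightarrow> ('a \<Rightarrow> complex) \<Rightarrow> bool" where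
  "is_state sm ip st w \<sigma> \<longleftrightarrow> clin_fun sm \<sigma> \<and> \<sigma> w = 1 \<and> (\<forall>\<xi>\<in>unital_cone ip st w. 0 \<le> \<sigma> \<xi>)"

definition psd :: "('i::finite \<Rightarrow> 'i \<Rightarrow> complex) \<Rightarrow> bool" where
  "psd A \<longleftrightarrow> (\<forall>c :: 'i \<Rightarrow> complex. 0 \<le> (\<Sum>i\<in>UNIV. \<Sum>j\<in>UNIV. cnj (c i) * A i j * c j))"

text \<open>Hermitian matrices: [x_ij]^* = [x_ji^*] equals [x_ij]. (For matrices over the conjugate
  space, representing eta-bar by eta, the condition reads the same.)\<close>
definition mat_herm :: "('a \<Rightarrow> 'a) \<Rightarrow> ('n \<Rightarrow> 'n \<Rightarrow> 'a) \<Rightarrow> bool" where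
  "mat_herm st Z \<longleftrightarrow> (\<forall>i j. st (Z j i) = Z i j)"

definition min_cone ::
  "(complex \<Rightarrow> 'a::ab_group_add \<Rightarrow> 'a) \<Rightarrow> ('a \<Rightarrow> 'a \<Rightarrow> complex) \<Rightarrow> ('a \<Rightarrow> 'a) \<Rightarrow> 'a
    \<Rightarrow> ('n::finite \<Rightarrow> 'n \<Rightarrow> 'a) set" where
  "min_cone sm ip st w = {Z. mat_herm st Z \<and>
     (\<forall>\<sigma>. is_state sm ip st w \<sigma> \<longrightarrow> psd (\<lambda>i j. \<sigma> (Z i j)))}"

text \<open>c_w^boxdot at level n: a matrix eta-bar over the conjugate space is represented by the
  matrix eta over H.\<close>
definition boxdot_cone ::
  "('a \<Rightarrow> 'a \<Rightarrow> complex) \<Rightarrow> ('a \<Rightarrow> 'a) \<Rightarrow> 'a \<Rightarrow> ('n::finite \<Rightarrow> 'n \<Rightarrow> 'a) set" where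
  "boxdot_cone ip st w = {\<eta>. mat_herm st \<eta> \<and>
     (\<forall>\<xi>\<in>unital_cone ip st w. psd (\<lambda>s t. ip \<xi> (\<eta> s t)))}"

definition max_cone ::
  "('a \<Rightarrow> 'a \<Rightarrow> complex) \<Rightarrow> ('a \<Rightarrow> 'a) \<Rightarrow> 'a \<Rightarrow> ('n::finite \<Rightarrow> 'n \<Rightarrow> 'a) set" where
  "max_cone ip st w = {Z. mat_herm st Z \<and>
     (\<forall>\<eta> :: 'n \<Rightarrow> 'n \<Rightarrow> 'a. \<eta> \<in> boxdot_cone ip st w \<longrightarrow>
        psd (\<lambda>(i, j) (k, l). ip (Z i k) (\<eta> j l)))}"

definition ampl :: "('a \<Rightarrow> 'a) \<Rightarrow> ('n \<Rightarrow> 'n \<Rightarrow> 'a) \<Rightarrow> ('n \<Rightarrow> 'n \<Rightarrow> 'a)" where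
  "ampl T Z = (\<lambda>i j. T (Z i j))"

end

theory Submission imports Defs begin

locale hs =
  fixes sm :: "complex \<Rightarrow> 'a::ab_group_add \<Rightarrow> 'a" and ip :: "'a \<Rightarrow> 'a \<Rightarrow> complex" and st :: "'a \<Rightarrow> 'a"
  assumes H: "hilbert_star_space sm ip st"
begin

lemmas HH = H[unfolded hilbert_star_space_def]

lemma sm_add_r: "sm a (x + y) = sm a x + sm a y" using HH[THEN conjunct1] by blast
lemma sm_add_l: "sm (a + b) x = sm a x + sm b x" using HH[THEN conjunct2, THEN conjunct1] by blast
lemma sm_one: "sm 1 x = x" using HH[THEN conjunct2, THEN conjunct2, THEN conjunct2, THEN conjunct1] by blast
lemma ip_add_l: "ip (x + y) z = ip x z + ip y z" using HH[THEN conjunct2, THEN conjunct2, THEN conjunct2, THEN conjunct2, THEN conjunct1] by blast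
lemma ip_sm_l: "ip (sm a x) y = a * ip x y" using HH[THEN conjunct2, THEN conjunct2, THEN conjunct2, THEN conjunct2, THEN conjunct2, THEN conjunct1] by blast
lemma ip_cnj: "ip y x = cnj (ip x y)" using HH[THEN conjunct2, THEN conjunct2, THEN conjunct2, THEN conjunct2, THEN conjunct2, THEN conjunct2, THEN conjunct1] by blast
lemma ip_pos: "0 \<le> ip x x" using HH[THEN conjunct2, THEN conjunct2, THEN conjunct2, THEN conjunct2, THEN conjunct2, THEN conjunct2, THEN conjunct2, THEN conjunct1] by blast
lemma ip_def0: "ip x x = 0 \<Longrightarrow> x = 0" using HH[THEN conjunct2, THEN conjunct2, THEN conjunct2, THEN conjunct2, THEN conjunct2, THEN conjunct2, THEN conjunct2, THEN conjunct2, THEN conjunct1] by blast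
lemma st_add: "st (x + y) = st x + st y" using HH[THEN conjunct2, THEN conjunct2, THEN conjunct2, THEN conjunct2, THEN conjunct2, THEN conjunct2, THEN conjunct2, THEN conjunct2, THEN conjunct2, THEN conjunct2, THEN conjunct1] by blast
lemma st_ip: "ip (st x) (st y) = cnj (ip x y)" using HH[THEN conjunct2, THEN conjunct2, THEN conjunct2, THEN conjunct2, THEN conjunct2, THEN conjunct2, THEN conjunct2, THEN conjunct2, THEN conjunct2, THEN conjunct2, THEN conjunct2, THEN conjunct2, THEN conjunct2] by blast

lemma ip_add_r: "ip z (x + y) = ip z x + ip z y"
  by (metis ip_cnj ip_add_l complex_cnj_add)
lemma ip_sm_r: "ip x (sm a y) = cnj a * ip x y"
  by (metis ip_cnj ip_sm_l complex_cnj_mult)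
lemma ip_zero_l: "ip 0 y = 0"
  using ip_add_l[of 0 0 y] by simp
lemma ip_zero_r: "ip y 0 = 0"
  using ip_add_r[of y 0 0] by simp
lemma ip_neg_l: "ip (- x) y = - ip x y"
  using ip_add_l[of x "-x" y] ip_zero_l by (simp add: eq_neg_iff_add_eq_0 add.commute)
lemma ip_neg_r: "ip y (- x) = - ip y x"
  using ip_add_r[of y x "-x"] ip_zero_r by (simp add: eq_neg_iff_add_eq_0 add.commute)
lemma ip_diff_l: "ip (x - z) y = ip x y - ip z y"
  by (simp only: diff_conv_add_uminus ip_add_l ip_neg_l)
lemma ip_diff_r: "ip y (x - z) = ip y x - ip y z"
  by (simp only: diff_conv_add_uminus ip_add_r ip_neg_r)
lemma sm_zero_l: "sm 0 x = 0"
  using sm_add_l[of 0 0 x] by simp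
lemma sm_zero_r: "sm a 0 = 0"
  using sm_add_r[of a 0 0] by simp
lemma st_zero: "st 0 = 0"
  using st_add[of 0 0] by simp
lemma st_neg: "st (- x) = - st x"
  using st_add[of x "-x"] st_zero by (simp add: eq_neg_iff_add_eq_0 add.commute)
lemma st_diff: "st (x - y) = st x - st y"
  by (simp only: diff_conv_add_uminus st_add st_neg)
lemma ip_sum_l: "finite A \<Longrightarrow> ip (\<Sum>l\<in>A. g l) v = (\<Sum>l\<in>A. ip (g l) v)"
  by (induction A rule: finite_induct) (auto simp: ip_zero_l ip_add_l)
lemma sm_two: "sm 2 x = x + x"
  using sm_add_l[of 1 1 x] by (simp add: sm_one)

lemma ip_self: "ip x x = complex_of_real (Re (ip x x))" "Re (ip x x) \<ge> 0"
  using ip_pos[of x] unfolding less_eq_complex_def by (auto simp: complex_eq_iff)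

lemma hnorm_sq: "(hnorm ip x)^2 = Re (ip x x)"
  unfolding hnorm_def using ip_self(2)[of x] by simp
lemma hnorm_ge0: "hnorm ip x \<ge> 0" unfolding hnorm_def using ip_self(2)[of x] by simp

lemma bessel_step:
  assumes "ip v v = 1"
  shows "Re (ip x x) = Re (ip (x - sm (ip x v) v) (x - sm (ip x v) v)) + (Re (ip x v))^2 + (Im (ip x v))^2"
proof -
  define a where "a = ip x v"
  have va: "ip v x = cnj a" using ip_cnj a_def by metis
  have "ip (x - sm a v) (x - sm a v) = ip x x - cnj a * a - a * cnj a + a * cnj a * ip v v"
    by (simp add: ip_diff_l ip_diff_r ip_sm_l ip_sm_r a_def[symmetric] va algebra_simps)
  also have "\<dots> = ip x x - a * cnj a" using assms by simp
  finally show ?thesis unfolding a_def[symmetric] by (simp add: complex_mult_cnj)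
qed

lemma step_orth: "ip v w = 0 \<Longrightarrow> ip (x - sm a v) w = ip x w"
  by (simp add: ip_diff_l ip_sm_l)

lemma bessel1: "ip v v = 1 \<Longrightarrow> (Re (ip x v))^2 \<le> Re (ip x x)"
  using bessel_step[of v x] ip_self(2)[of "x - sm (ip x v) v"] by (simp add: add_nonneg_nonneg)

lemma bessel2: "ip v v = 1 \<Longrightarrow> ip w w = 1 \<Longrightarrow> ip v w = 0 \<Longrightarrow>
   (Re (ip x v))^2 + (Re (ip x w))^2 \<le> Re (ip x x)"
  using bessel_step[of v x] bessel1[of w "x - sm (ip x v) v"] step_orth[of v w x "ip x v"]
  by (smt (verit) zero_le_power2)

lemma bessel3: "ip v v = 1 \<Longrightarrow> ip w w = 1 \<Longrightarrow> ip h h = 1 \<Longrightarrow> ip v w = 0 \<Longrightarrow> ip v h = 0 \<Longrightarrow> ip w h = 0 \<Longrightarrow>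
   (Re (ip x v))^2 + (Re (ip x w))^2 + (Re (ip x h))^2 \<le> Re (ip x x)"
  using bessel_step[of v x] bessel2[of w h "x - sm (ip x v) v"] step_orth[of v w x "ip x v"]
    step_orth[of v h x "ip x v"]
  by (smt (verit) zero_le_power2)

lemma cs1: "ip v v = 1 \<Longrightarrow> \<bar>Re (ip x v)\<bar> \<le> hnorm ip x"
  unfolding hnorm_def using bessel1 real_le_rsqrt by (metis power2_abs)

end

lemma img_inv: "(\<And>x. x\<in>A \<Longrightarrow> g x \<in> B) \<Longrightarrow> (\<And>y. y\<in>B \<Longrightarrow> g y \<in> A) \<Longrightarrow> (\<And>y. g (g y) = y) \<Longrightarrow> g ` A = B"
  by (metis image_iff subsetI subset_antisym image_subsetI)

locale swp = hs sm ip st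
  for sm :: "complex \<Rightarrow> 'a::ab_group_add \<Rightarrow> 'a" and ip st +
  fixes F :: "'a set" and u e :: 'a and T :: "'a \<Rightarrow> 'a"
  assumes F: "hermitian_basis ip st F"
    and u: "u \<in> F" and e: "e \<in> F" and ue: "u \<noteq> e"
    and T: "unitary_op sm ip T"
    and Tu: "T u = e" and Te: "T e = u"
    and Tf: "\<forall>f\<in>F - {u, e}. T f = f"
begin

lemmas FF = F[unfolded hermitian_basis_def]
lemma F_herm: "f \<in> F \<Longrightarrow> st f = f" using FF[THEN conjunct1] by blast
lemma F_unit: "f \<in> F \<Longrightarrow> ip f f = 1" using FF[THEN conjunct2, THEN conjunct1] by blast
lemma F_orth: "f \<in> F \<Longrightarrow> g \<in> F \<Longrightarrow> f \<noteq> g \<Longrightarrow> ip f g = 0" using FF[THEN conjunct2, THEN conjunct2, THEN conjunct1] by blast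
lemma F_max: "(\<forall>f\<in>F. ip x f = 0) \<Longrightarrow> x = 0" using FF[THEN conjunct2, THEN conjunct2, THEN conjunct2] by blast

lemma ext: "(\<And>f. f\<in>F \<Longrightarrow> ip x f = ip y f) \<Longrightarrow> x = y"
  using F_max[of "x - y"] by (simp add: ip_diff_l)

lemmas TT0 = T[unfolded unitary_op_def clin_map_def]
lemma T_add: "T (x + y) = T x + T y" using TT0[THEN conjunct1, THEN conjunct1] by blast
lemma T_sm: "T (sm a x) = sm a (T x)" using TT0[THEN conjunct1, THEN conjunct2] by blast
lemma T_ip: "ip (T x) (T y) = ip x y" using TT0[THEN conjunct2, THEN conjunct2, THEN conjunct1] by blast
lemma T_zero: "T 0 = 0" using T_add[of 0 0] by simp
lemma T_neg: "T (- x) = - T x" using T_add[of x "-x"] T_zero by (simp add: eq_neg_iff_add_eq_0 add.commute)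
lemma T_diff: "T (x - y) = T x - T y" by (simp only: diff_conv_add_uminus T_add T_neg)

lemma TF: "f \<in> F \<Longrightarrow> T f \<in> F \<and> T (T f) = f"
  using Tu Te Tf u e by (cases "f = u"; cases "f = e") auto

lemma TT: "T (T x) = x"
proof (rule ext)
  fix f assume f: "f \<in> F"
  have "ip (T (T x)) f = ip (T (T x)) (T (T f))" using TF f by simp
  also have "\<dots> = ip x f" by (simp add: T_ip)
  finally show "ip (T (T x)) f = ip x f" .
qed

lemma T_adj: "ip (T x) y = ip x (T y)"
  by (metis TT T_ip)

lemma T_st: "st (T x) = T (st x)"
proof (rule ext)
  fix f assume f: "f \<in> F"
  have Tf': "T f \<in> F" using TF f by blast
  have "ip (st (T x)) f = ip (st (T x)) (st f)" using F_herm f by simp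
  also have "\<dots> = cnj (ip x (T f))" by (simp add: st_ip T_adj)
  also have "\<dots> = ip (st x) (st (T f))" by (simp add: st_ip)
  also have "\<dots> = ip (T (st x)) f" using F_herm Tf' by (simp add: T_adj TT)
  finally show "ip (st (T x)) f = ip (T (st x)) f" .
qed

lemma T_norm: "hnorm ip (T x) = hnorm ip x" unfolding hnorm_def by (simp add: T_ip)

lemma cone_map: "T w = w' \<Longrightarrow> x \<in> unital_cone ip st w \<Longrightarrow> T x \<in> unital_cone ip st w'"
  unfolding unital_cone_def using T_ip[of x w] by (auto simp: T_st T_norm)

lemma ampl_TT: "ampl T (ampl T Z) = Z" unfolding ampl_def by (simp add: TT)

lemma min_map: assumes "T w = w'" "Z \<in> min_cone sm ip st w"
  shows "ampl T Z \<in> min_cone sm ip st w'"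
proof -
  have h: "mat_herm st Z" and p: "\<And>\<sigma>. is_state sm ip st w \<sigma> \<Longrightarrow> psd (\<lambda>i j. \<sigma> (Z i j))"
    using assms(2) unfolding min_cone_def by auto
  have "mat_herm st (ampl T Z)" using h unfolding mat_herm_def ampl_def by (simp add: T_st)
  moreover have "psd (\<lambda>i j. \<sigma> (ampl T Z i j))" if s: "is_state sm ip st w' \<sigma>" for \<sigma>
  proof -
    have "is_state sm ip st w (\<sigma> \<circ> T)"
      using s assms(1) cone_map[OF assms(1)] unfolding is_state_def clin_fun_def
      by (auto simp: T_add T_sm)
    then show ?thesis using p[of "\<sigma> \<circ> T"] unfolding ampl_def by simp
  qed
  ultimately show ?thesis unfolding min_cone_def by blast
qed

lemma max_map: fixes Z :: "'n::finite \<Rightarrow> 'n \<Rightarrow> 'a"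
  assumes "T w = w'" "Z \<in> max_cone ip st w"
  shows "ampl T Z \<in> max_cone ip st w'"
proof -
  have h: "mat_herm st Z" and p: "\<And>\<eta> :: 'n \<Rightarrow> 'n \<Rightarrow> 'a. \<eta> \<in> boxdot_cone ip st w \<Longrightarrow> psd (\<lambda>(i, j) (k, l). ip (Z i k) (\<eta> j l))"
    using assms(2) unfolding max_cone_def by auto
  have "mat_herm st (ampl T Z)" using h unfolding mat_herm_def ampl_def by (simp add: T_st)
  moreover have "psd (\<lambda>(i, j) (k, l). ip (ampl T Z i k) (\<eta> j l))" if s: "\<eta> \<in> boxdot_cone ip st w'" for \<eta> :: "'n \<Rightarrow> 'n \<Rightarrow> 'a"
  proof -
    have "ampl T \<eta> \<in> boxdot_cone ip st w"
      using s cone_map[OF assms(1)] unfolding boxdot_cone_def mat_herm_def ampl_def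
      by (auto simp: T_st T_adj[symmetric])
    then show ?thesis using p[of "ampl T \<eta>"] unfolding ampl_def by (simp add: T_adj)
  qed
  ultimately show ?thesis unfolding max_cone_def by blast
qed

lemma part1: "T ` unital_cone ip st u = unital_cone ip st e"
  by (rule img_inv) (auto intro: cone_map Tu Te TT)

lemma part2: "ampl T ` (min_cone sm ip st u :: ('n::finite \<Rightarrow> 'n \<Rightarrow> 'a) set) = min_cone sm ip st e"
  by (rule img_inv) (auto intro: min_map Tu Te simp: ampl_TT)

lemma part3: "ampl T ` (max_cone ip st u :: ('n::finite \<Rightarrow> 'n \<Rightarrow> 'a) set) = max_cone ip st e"
  by (rule img_inv) (auto intro: max_map Tu Te simp: ampl_TT)


lemma psi_nonneg:
  assumes g: "g \<in> F" "g \<noteq> e" and s: "\<bar>s\<bar> \<le> 1" and y: "y \<in> unital_cone ip st e"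
  shows "0 \<le> Re (ip y e) + s * Re (ip y g)"
proof -
  define r where "r = Re (ip y e)"
  define a where "a = Re (ip y g)"
  have c: "hnorm ip y \<le> sqrt 2 * r" using y unfolding unital_cone_def r_def by auto
  have "0 \<le> sqrt 2 * r" using c hnorm_ge0[of y] by linarith
  then have r0: "r \<ge> 0" by (simp add: zero_le_mult_iff)
  have "(hnorm ip y)^2 \<le> (sqrt 2 * r)^2" using c hnorm_ge0[of y] by (simp add: power_mono)
  then have n2: "Re (ip y y) \<le> 2 * r^2" by (simp add: hnorm_sq power_mult_distrib)
  have b: "r^2 + a^2 \<le> Re (ip y y)" unfolding r_def a_def
    using bessel2[of e g y] F_unit e g F_orth by auto
  have "a^2 \<le> r^2" using n2 b by simp
  then have "\<bar>a\<bar> \<le> r" using r0 by (metis abs_le_square_iff abs_of_nonneg)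
  moreover have "\<bar>s * a\<bar> \<le> \<bar>a\<bar>" using s by (simp add: abs_mult mult_left_le_one_le)
  ultimately show ?thesis unfolding r_def[symmetric] a_def[symmetric] by linarith
qed

lemma key:
  assumes hq: "\<forall>l. clin_fun sm (q l) \<and> (\<forall>\<xi>\<in>unital_cone ip st u. 0 \<le> q l \<xi>) \<and> p l \<in> unital_cone ip st e"
    and hlim: "\<forall>\<zeta>. (\<lambda>k. hnorm ip (T \<zeta> - (\<Sum>l=1..k. sm (q l \<zeta>) (p l)))) \<longlonglongrightarrow> 0"
    and z: "\<zeta> \<in> unital_cone ip st u" and g: "g \<in> F" "g \<noteq> e" and s: "\<bar>s\<bar> \<le> 1"
    and z0: "Re (ip (T \<zeta>) e) + s * Re (ip (T \<zeta>) g) = 0" and l: "l \<ge> 1"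
  shows "q l \<zeta> = 0 \<or> Re (ip (p l) e) + s * Re (ip (p l) g) = 0"
proof -
  define \<psi> where "\<psi> y = Re (ip y e) + s * Re (ip y g)" for y
  define t where "t j = Re (q j \<zeta>) * \<psi> (p j)" for j
  define S where "S k = (\<Sum>l=1..k. sm (q l \<zeta>) (p l))" for k
  have qpos: "0 \<le> q j \<zeta>" for j using hq z by blast
  have pc: "p j \<in> unital_cone ip st e" for j using hq by blast
  have imq: "Im (q j \<zeta>) = 0" and req: "Re (q j \<zeta>) \<ge> 0" for j
    using qpos[of j] unfolding less_eq_complex_def by auto
  have t0: "t j \<ge> 0" for j unfolding t_def
    by (rule mult_nonneg_nonneg[OF req]) (unfold \<psi>_def, rule psi_nonneg[OF g s pc])
  have ipS: "Re (ip (S k) v) = (\<Sum>l=1..k. Re (q l \<zeta>) * Re (ip (p l) v))" for k v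
    unfolding S_def by (simp add: ip_sum_l ip_sm_l imq)
  have psum: "\<psi> (S k) = (\<Sum>l=1..k. t l)" for k
    unfolding \<psi>_def t_def ipS by (simp add: sum.distrib sum_distrib_left distrib_left mult.left_commute)
  have pdiff: "\<psi> (x - y) = \<psi> x - \<psi> y" for x y unfolding \<psi>_def by (simp add: ip_diff_l algebra_simps)
  have bound: "norm (\<psi> y) \<le> 2 * hnorm ip y" for y
  proof -
    have "\<bar>Re (ip y e)\<bar> \<le> hnorm ip y" using cs1 F_unit e by blast
    moreover have "\<bar>Re (ip y g)\<bar> \<le> hnorm ip y" using cs1 F_unit g by blast
    moreover have "\<bar>s * Re (ip y g)\<bar> \<le> \<bar>Re (ip y g)\<bar>" using s by (simp add: abs_mult mult_left_le_one_le)
    moreover have "\<bar>Re (ip y e) + s * Re (ip y g)\<bar> \<le> \<bar>Re (ip y e)\<bar> + \<bar>s * Re (ip y g)\<bar>"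
      by (rule abs_triangle_ineq)
    ultimately show ?thesis unfolding \<psi>_def real_norm_def by linarith
  qed
  have z0': "\<psi> (T \<zeta>) = 0" using z0 unfolding \<psi>_def .
  have eq: "\<psi> (T \<zeta> - S k) = - (\<Sum>l=1..k. t l)" for k
    by (simp add: pdiff psum z0')
  have h2: "(\<lambda>k. 2 * hnorm ip (T \<zeta> - S k)) \<longlonglongrightarrow> 0"
    using hlim unfolding S_def by (intro tendsto_mult_right_zero) blast
  have "(\<lambda>k. - (\<Sum>l=1..k. t l)) \<longlonglongrightarrow> 0"
  proof (rule Lim_null_comparison[OF _ h2])
    show "\<forall>\<^sub>F k in sequentially. norm (- (\<Sum>l=1..k. t l)) \<le> 2 * hnorm ip (T \<zeta> - S k)"
      by (rule always_eventually) (metis eq bound)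
  qed
  from tendsto_minus[OF this] have lim: "(\<lambda>k. (\<Sum>l=1..k. t l)) \<longlonglongrightarrow> 0" by simp
  have "t l \<le> 0"
  proof (rule LIMSEQ_le_const[OF lim], intro exI allI impI)
    fix n assume "l \<le> n"
    then show "t l \<le> (\<Sum>l=1..n. t l)" using l t0 by (intro member_le_sum) auto
  qed
  then have "t l = 0" using t0[of l] by simp
  then have "Re (q l \<zeta>) = 0 \<or> \<psi> (p l) = 0" unfolding t_def by simp
  then show ?thesis using imq[of l] unfolding \<psi>_def by (auto simp: complex_eq_iff)
qed


lemma cone_pm: assumes "w \<in> F" "g \<in> F" "g \<noteq> w"
  shows "w + g \<in> unital_cone ip st w" "w - g \<in> unital_cone ip st w"
proof -
  have o: "ip w g = 0" "ip g w = 0" using F_orth assms by auto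
  have n: "ip w w = 1" "ip g g = 1" using F_unit assms by auto
  have "ip (w + g) (w + g) = 2" by (simp add: ip_add_l ip_add_r o n)
  moreover have "ip (w + g) w = 1" by (simp add: ip_add_l o n)
  moreover have "st (w + g) = w + g" using F_herm assms by (simp add: st_add)
  ultimately show "w + g \<in> unital_cone ip st w" unfolding unital_cone_def hnorm_def by simp
  have "ip (w - g) (w - g) = 2" by (simp add: ip_diff_l ip_diff_r o n)
  moreover have "ip (w - g) w = 1" by (simp add: ip_diff_l o n)
  moreover have "st (w - g) = w - g" using F_herm assms by (simp add: st_diff)
  ultimately show "w - g \<in> unital_cone ip st w" unfolding unital_cone_def hnorm_def by simp
qed

lemma pzero: assumes p: "p \<in> unital_cone ip st e" and f: "f \<in> F" "f \<noteq> u" "f \<noteq> e"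
  and a: "(Re (ip p u))^2 = (Re (ip p e))^2" and b: "(Re (ip p f))^2 = (Re (ip p e))^2"
  shows "p = 0"
proof -
  define r where "r = Re (ip p e)"
  have c: "hnorm ip p \<le> sqrt 2 * r" using p unfolding unital_cone_def r_def by auto
  have "0 \<le> sqrt 2 * r" using c hnorm_ge0[of p] by linarith
  then have r0: "r \<ge> 0" by (simp add: zero_le_mult_iff)
  have "(hnorm ip p)^2 \<le> (sqrt 2 * r)^2" using c hnorm_ge0[of p] by (simp add: power_mono)
  then have n2: "Re (ip p p) \<le> 2 * r^2" by (simp add: hnorm_sq power_mult_distrib)
  have "(Re (ip p e))^2 + (Re (ip p u))^2 + (Re (ip p f))^2 \<le> Re (ip p p)"
    using bessel3[of e u f p] F_unit F_orth e u f ue by (metis)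
  then have "3 * r^2 \<le> Re (ip p p)" using a b unfolding r_def by simp
  then have "Re (ip p p) \<le> 0" using n2 by (smt (verit) zero_le_power2)
  then have "ip p p = 0" using ip_self[of p] by (simp add: complex_eq_iff)
  then show ?thesis by (rule ip_def0)
qed

lemma part5: assumes f: "f \<in> F" "f \<noteq> u" "f \<noteq> e"
  shows "\<not> (\<exists>(q :: nat \<Rightarrow> 'a \<Rightarrow> complex) (p :: nat \<Rightarrow> 'a).
          (\<forall>l. clin_fun sm (q l) \<and> (\<forall>\<xi>\<in>unital_cone ip st u. 0 \<le> q l \<xi>)
               \<and> p l \<in> unital_cone ip st e)
          \<and> (\<forall>\<zeta>. (\<lambda>k. hnorm ip (T \<zeta> - (\<Sum>l=1..k. sm (q l \<zeta>) (p l)))) \<longlonglongrightarrow> 0))"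
proof
  assume "\<exists>(q :: nat \<Rightarrow> 'a \<Rightarrow> complex) (p :: nat \<Rightarrow> 'a).
          (\<forall>l. clin_fun sm (q l) \<and> (\<forall>\<xi>\<in>unital_cone ip st u. 0 \<le> q l \<xi>)
               \<and> p l \<in> unital_cone ip st e)
          \<and> (\<forall>\<zeta>. (\<lambda>k. hnorm ip (T \<zeta> - (\<Sum>l=1..k. sm (q l \<zeta>) (p l)))) \<longlonglongrightarrow> 0)"
  then obtain q p where hq: "\<forall>l. clin_fun sm (q l) \<and> (\<forall>\<xi>\<in>unital_cone ip st u. 0 \<le> q l \<xi>)
               \<and> p l \<in> unital_cone ip st e"
    and hlim: "\<forall>\<zeta>. (\<lambda>k. hnorm ip (T \<zeta> - (\<Sum>l=1..k. sm (q l \<zeta>) (p l)))) \<longlonglongrightarrow> 0" by blast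
  have oue: "ip u e = 0" "ip e u = 0" using F_orth u e ue by auto
  have ouf: "ip f u = 0" "ip f e = 0" "ip u f = 0" "ip e f = 0" using F_orth u e f by auto
  have nn: "ip u u = 1" "ip e e = 1" "ip f f = 1" using F_unit u e f by auto
  have Tff: "T f = f" using Tf f by blast
  have c1: "u + e \<in> unital_cone ip st u" "u - e \<in> unital_cone ip st u" using cone_pm[OF u e] ue by auto
  have c2: "u + f \<in> unital_cone ip st u" "u - f \<in> unital_cone ip st u" using cone_pm[OF u f(1)] f by auto
  have T1: "T (u + e) = e + u" "T (u - e) = e - u" "T (u + f) = e + f" "T (u - f) = e - f"
    by (simp_all add: T_add T_diff Tu Te Tff)
  have K: "q l \<zeta> = 0 \<or> Re (ip (p l) e) + s * Re (ip (p l) g) = 0"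
    if "\<zeta> \<in> unital_cone ip st u" "g \<in> F" "g \<noteq> e" "\<bar>s\<bar> \<le> 1"
      "Re (ip (T \<zeta>) e) + s * Re (ip (T \<zeta>) g) = 0" "l \<ge> 1" for \<zeta> g s l
    using key[OF hq hlim that] .
  have zero: "sm (q l u) (p l) = 0" if l: "l \<ge> 1" for l
  proof (cases "q l u = 0")
    case True then show ?thesis by (simp add: sm_zero_l)
  next
    case False
    have lin: "clin_fun sm (q l)" using hq by blast
    have qa: "q l (x + y) = q l x + q l y" for x y using lin unfolding clin_fun_def by blast
    have pos: "0 \<le> q l \<xi>" if "\<xi> \<in> unital_cone ip st u" for \<xi> using hq that by blast
    have s1: "q l (u + e) + q l (u - e) = q l u + q l u"
      by (metis qa add.commute add.left_commute diff_add_cancel)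
    have s2: "q l (u + f) + q l (u - f) = q l u + q l u"
      by (metis qa add.commute add.left_commute diff_add_cancel)
    have "q l u + q l u \<noteq> 0" using False by (simp add: complex_eq_iff)
    then have A: "q l (u + e) \<noteq> 0 \<or> q l (u - e) \<noteq> 0" and B: "q l (u + f) \<noteq> 0 \<or> q l (u - f) \<noteq> 0"
      using s1 s2 by auto
    have A': "(Re (ip (p l) u))^2 = (Re (ip (p l) e))^2"
    proof (cases "q l (u + e) \<noteq> 0")
      case True
      have "Re (ip (p l) e) + (-1) * Re (ip (p l) u) = 0"
        using K[OF c1(1) u, of "-1" l] True l ue T1 by (simp add: ip_add_l oue nn)
      then show ?thesis by (simp add: power2_eq_square)
    next
      case False
      then have "q l (u - e) \<noteq> 0" using A by blast
      then have "Re (ip (p l) e) + 1 * Re (ip (p l) u) = 0"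
        using K[OF c1(2) u, of 1 l] l ue T1 by (simp add: ip_diff_l oue nn)
      then have "Re (ip (p l) u) = - Re (ip (p l) e)" by linarith
      then show ?thesis by simp
    qed
    have B': "(Re (ip (p l) f))^2 = (Re (ip (p l) e))^2"
    proof (cases "q l (u + f) \<noteq> 0")
      case True
      have "Re (ip (p l) e) + (-1) * Re (ip (p l) f) = 0"
        using K[OF c2(1) f(1), of "-1" l] True l f T1 by (simp add: ip_add_l ouf nn)
      then show ?thesis by (simp add: power2_eq_square)
    next
      case False
      then have "q l (u - f) \<noteq> 0" using B by blast
      then have "Re (ip (p l) e) + 1 * Re (ip (p l) f) = 0"
        using K[OF c2(2) f(1), of 1 l] l f T1 by (simp add: ip_diff_l ouf nn)
      then have "Re (ip (p l) f) = - Re (ip (p l) e)" by linarith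
      then show ?thesis by simp
    qed
    have "p l = 0" using pzero[OF _ f A' B'] hq by blast
    then show ?thesis by (simp add: sm_zero_r)
  qed
  have "(\<Sum>l=1..k. sm (q l u) (p l)) = 0" for k using zero by (intro sum.neutral) auto
  then have "(\<lambda>k. hnorm ip (T u - (\<Sum>l=1..k. sm (q l u) (p l)))) = (\<lambda>k. 1)"
    by (simp add: Tu hnorm_def nn)
  then have "(\<lambda>k. 1::real) \<longlonglongrightarrow> 0" using hlim by metis
  then show False by (simp add: LIMSEQ_const_iff)
qed

end

theorem mainTheorem16:
  fixes sm :: "complex \<Rightarrow> 'a::ab_group_add \<Rightarrow> 'a"
    and ip :: "'a \<Rightarrow> 'a \<Rightarrow> complex"
    and st :: "'a \<Rightarrow> 'a"
    and F :: "'a set" and u e :: 'a and T :: "'a \<Rightarrow> 'a"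
  assumes H: "hilbert_star_space sm ip st"
    and F: "hermitian_basis ip st F"
    and inf: "infinite F"
    and u: "u \<in> F" and e: "e \<in> F" and ue: "u \<noteq> e"
    and T: "unitary_op sm ip T"
    and Tu: "T u = e" and Te: "T e = u"
    and Tf: "\<forall>f\<in>F - {u, e}. T f = f"
  shows "T ` unital_cone ip st u = unital_cone ip st e
    \<and> ampl T ` (min_cone sm ip st u :: ('n::finite \<Rightarrow> 'n \<Rightarrow> 'a) set) = min_cone sm ip st e
    \<and> ampl T ` (max_cone ip st u :: ('n \<Rightarrow> 'n \<Rightarrow> 'a) set) = max_cone ip st e
    \<and> (T u = e \<and> ampl T ` (max_cone ip st u :: ('n \<Rightarrow> 'n \<Rightarrow> 'a) set) \<subseteq> max_cone ip st e)
    \<and> \<not> (\<exists>(q :: nat \<Rightarrow> 'a \<Rightarrow> complex) (p :: nat \<Rightarrow> 'a).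
          (\<forall>l. clin_fun sm (q l) \<and> (\<forall>\<xi>\<in>unital_cone ip st u. 0 \<le> q l \<xi>)
               \<and> p l \<in> unital_cone ip st e)
          \<and> (\<forall>\<zeta>. (\<lambda>k. hnorm ip (T \<zeta> - (\<Sum>l=1..k. sm (q l \<zeta>) (p l)))) \<longlonglongrightarrow> 0))"
proof -
  interpret swp sm ip st F u e T
    by (intro swp.intro hs.intro swp_axioms.intro) (use assms in auto)
  have "F - {u, e} \<noteq> {}"
  proof
    assume "F - {u, e} = {}"
    then have "F \<subseteq> {u, e}" by blast
    then show False using inf finite_subset by blast
  qed
  then obtain f where f: "f \<in> F" "f \<noteq> u" "f \<noteq> e" by blast
  have p2: "ampl T ` (min_cone sm ip st u :: ('n::finite \<Rightarrow> 'n \<Rightarrow> 'a) set) = min_cone sm ip st e"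
    by (rule part2)
  have p3: "ampl T ` (max_cone ip st u :: ('n \<Rightarrow> 'n \<Rightarrow> 'a) set) = max_cone ip st e"
    by (rule part3)
  show ?thesis using part1 p2 p3 part5[OF f] Tu by simp
qed

end
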